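(* Let $J$ be a bounded half-line Jacobi matrix with $0<\inf_na_n\le\sup_na_n<\infty$, let $\mathcal R$ be the set of its right limits, and let $K\subset\mathbb{R}$ be compact. Suppose that for each $x_0\in K$ and $J^{(r)}\in\mathcal R$ there is a (complex) solution $u^+=u^+(J^{(r)},x_0)$, $n\in\mathbb{Z}$, of $a^{(r)}_nu_{n+1}+b^{(r)}_nu_n+a^{(r)}_{n-1}u_{n-1}=x_0u_n$ such that (i) $\sup_{n\in\mathbb{Z},\,x_0\in K,\,J^{(r)}\in\mathcal R}|u^+_n(J^{(r)},x_0)|<\infty$, and (ii) $\inf_{x_0\in K,\,J^{(r)}\in\mathcal R}\ a_0^{(r)}\big|u_1^+\overline{u_0^+}-\overline{u_1^+}u_0^+\big|>0$. Then the Nevai condition holds for $J$ uniformly on $K$, i.e. $\sup_{x_0\in K}\ p_n(x_0)^2/K_n(x_0,x_0)\to0$ as $n\to\infty$ (and hence the Nevai condition holds at every $x_0\in K$).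
   Context: A half-line Jacobi matrix $J$ with parameters $\{a_n,b_n\}_{n\ge1}$ ($a_n>0$) acts on $\ell^2(\{1,2,\dots\})$ by $J_{nn}=b_n$, $J_{n,n+1}=J_{n+1,n}=a_n$; $\rho$ is its spectral measure for $\delta_1$, $p_n$ ($n\ge0$) its orthonormal polynomials ($p_{-1}=0$, $p_0=1$, $xp_n=a_{n+1}p_{n+1}+b_{n+1}p_n+a_np_{n-1}$), and $K_n(x,y)=\sum_{j=0}^np_j(x)p_j(y)$. A two-sided sequence $\{a^{(r)}_n,b^{(r)}_n\}_{n\in\mathbb{Z}}$ is a right limit of $J$ if there are $m_j\to\infty$ with $a_{m_j+n}\to a^{(r)}_n$ and $b_{m_j+n}\to b^{(r)}_n$ for every $n\in\mathbb{Z}$; the corresponding two-sided Jacobi matrix is denoted $J^{(r)}$. The Nevai condition at $x_0$ means $K_n(x,x_0)^2\,d\rho(x)/K_n(x_0,x_0)\to\delta_{x_0}$ weakly. *)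

theory Defs
  imports "HOL-Analysis.Analysis"
begin

text \<open>Half-line Jacobi parameters are functions a b :: nat \<Rightarrow> real, of which only
  the values at n \<ge> 1 are used (a n = a_n, b n = b_n).\<close>

fun orth_poly :: "(nat \<Rightarrow> real) \<Rightarrow> (nat \<Rightarrow> real) \<Rightarrow> nat \<Rightarrow> real \<Rightarrow> real" where
  "orth_poly a b 0 x = 1"
| "orth_poly a b (Suc 0) x = (x - b 1) / a 1"
| "orth_poly a b (Suc (Suc n)) x =
     ((x - b (n + 2)) * orth_poly a b (Suc n) x - a (n + 1) * orth_poly a b n x) / a (n + 2)"

definition CD_kernel :: "(nat \<Rightarrow> real) \<Rightarrow> (nat \<Rightarrow> real) \<Rightarrow> nat \<Rightarrow> real \<Rightarrow> real \<Rightarrow> real" where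
  "CD_kernel a b n x y = (\<Sum>j\<le>n. orth_poly a b j x * orth_poly a b j y)"

text \<open>Two-sided sequences (ar, br) form a right limit of (a, b) if along some
  sequence m_j \<rightarrow> \<infinity>, a_{m_j+n} \<rightarrow> ar_n and b_{m_j+n} \<rightarrow> br_n for every integer n.
  (The indices m_j + n are eventually \<ge> 1, so the truncation by nat is irrelevant.)\<close>
definition is_right_limit ::
  "(nat \<Rightarrow> real) \<Rightarrow> (nat \<Rightarrow> real) \<Rightarrow> (int \<Rightarrow> real) \<Rightarrow> (int \<Rightarrow> real) \<Rightarrow> bool" where
  "is_right_limit a b ar br \<longleftrightarrow>
     (\<exists>m :: nat \<Rightarrow> nat. filterlim m at_top sequentially \<and>
        (\<forall>n::int. (\<lambda>j. a (nat (int (m j) + n))) \<longlonglongrightarrow> ar n \<and>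
                  (\<lambda>j. b (nat (int (m j) + n))) \<longlonglongrightarrow> br n))"

text \<open>Action of the half-line Jacobi matrix on sequences indexed by {1,2,...}
  (the value at index 0 is ignored, i.e. treated as 0).\<close>
definition jacobi_apply :: "(nat \<Rightarrow> real) \<Rightarrow> (nat \<Rightarrow> real) \<Rightarrow> (nat \<Rightarrow> real) \<Rightarrow> nat \<Rightarrow> real" where
  "jacobi_apply a b v n =
     (if n = 0 then 0
      else (if n = 1 then 0 else a (n - 1) * v (n - 1)) + b n * v n + a n * v (n + 1))"

text \<open>Spectral measure of J for \<delta>_1: a Borel measure on the reals with
  \<integral> x^k d\<rho> = \<langle>\<delta>_1, J^k \<delta>_1\<rangle> for all k (for bounded J this determines \<rho>).\<close>
definition jacobi_spectral_measure ::
  "(nat \<Rightarrow> real) \<Rightarrow> (nat \<Rightarrow> real) \<Rightarrow> real measure \<Rightarrow> bool" where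
  "jacobi_spectral_measure a b \<rho> \<longleftrightarrow>
     sets \<rho> = sets borel \<and> finite_measure \<rho> \<and>
     (\<forall>k::nat. integrable \<rho> (\<lambda>x. x ^ k) \<and>
        integral\<^sup>L \<rho> (\<lambda>x. x ^ k) =
          ((jacobi_apply a b ^^ k) (\<lambda>n. if n = 1 then 1 else 0)) 1)"

end

theory Submission
  imports Defs
begin


lemma p_rec:
  assumes "a (j+2) \<noteq> 0"
  shows "a (j+2) * orth_poly a b (j+2) x + b (j+2) * orth_poly a b (j+1) x + a (j+1) * orth_poly a b j x
         = x * orth_poly a b (j+1) x"
proof -
  have "orth_poly a b (Suc (Suc j)) x = ((x - b (j + 2)) * orth_poly a b (Suc j) x - a (j + 1) * orth_poly a b j x) / a (j + 2)"
    by simp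
  then show ?thesis using assms by (simp add: field_simps)
qed

lemma Kd_ge: "(orth_poly a b i x)\<^sup>2 \<le> CD_kernel a b n x x" if "i \<le> n"
proof -
  have "(orth_poly a b i x)\<^sup>2 = (\<Sum>j\<in>{i}. orth_poly a b j x * orth_poly a b j x)" by (simp add: power2_eq_square)
  also have "\<dots> \<le> (\<Sum>j\<le>n. orth_poly a b j x * orth_poly a b j x)"
    by (rule sum_mono2) (use that in auto)
  finally show ?thesis by (simp add: CD_kernel_def)
qed

lemma Kd_pos: "CD_kernel a b n x x \<ge> 1"
  using Kd_ge[of 0 n a b x] by simp

lemma wr_step:
  fixes A0 A1 B X W0 W1 W2 U0 U1 U2 :: complex
  assumes "A1*W2 + B*W1 + A0*W0 = X*W1" "A1*U2 + B*U1 + A0*U0 = X*U1"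
  shows "A1*(W2*U1 - U2*W1) = A0*(W1*U0 - U1*W0)"
  using assms by algebra

lemma final_alg:
  fixes w0 w1 :: real and u0 u1 :: complex
  assumes "of_real w1 * u0 = u1 * of_real w0" "u1 * cnj u0 - cnj u1 * u0 \<noteq> 0"
  shows "w1 = 0"
proof -
  have c: "of_real w1 * cnj u0 = cnj u1 * of_real w0" using arg_cong[OF assms(1), of cnj] by simp
  have "of_real w1 * (u1 * cnj u0 - cnj u1 * u0) = u1 * (of_real w1 * cnj u0) - cnj u1 * (of_real w1 * u0)"
    by (simp add: algebra_simps)
  also have "\<dots> = 0" unfolding c assms(1) by (simp add: algebra_simps)
  finally show ?thesis using assms(2) by simp
qed



definition Wf :: "(nat \<Rightarrow> real) \<Rightarrow> (nat \<Rightarrow> real) \<Rightarrow> nat \<Rightarrow> real \<Rightarrow> int \<Rightarrow> real" where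
  "Wf a b n x j = (if j \<le> 1 \<and> 0 \<le> int n + j - 1
      then orth_poly a b (nat (int n + j - 1)) x / sqrt (CD_kernel a b n x x) else 0)"

lemma Wf_sq_le: "(Wf a b n x j)\<^sup>2 \<le> 1"
proof (cases "j \<le> 1 \<and> 0 \<le> int n + j - 1")
  case True
  have k: "CD_kernel a b n x x \<ge> 1" by (rule Kd_pos)
  have e: "(Wf a b n x j)\<^sup>2 = (orth_poly a b (nat (int n + j - 1)) x)\<^sup>2 / CD_kernel a b n x x"
    using True k by (simp add: Wf_def power_divide)
  have "nat (int n + j - 1) \<le> n" using True by linarith
  then have "(orth_poly a b (nat (int n + j - 1)) x)\<^sup>2 \<le> CD_kernel a b n x x" by (rule Kd_ge)
  then show ?thesis using e k by simp
next
  case False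
  then have "Wf a b n x j = 0" unfolding Wf_def by auto
  then show ?thesis by simp
qed

lemma Wf_bdd: "\<bar>Wf a b n x j\<bar> \<le> 1"
  using Wf_sq_le[of a b n x j] by (simp add: abs_square_le_1)

lemma Wf_sum: "(\<Sum>m<N. (Wf a b n x (- int m))\<^sup>2) \<le> 1"
proof -
  define P where "P i = (orth_poly a b i x)\<^sup>2 / CD_kernel a b n x x" for i
  have k: "CD_kernel a b n x x \<ge> 1" by (rule Kd_pos)
  have W: "(Wf a b n x (- int m))\<^sup>2 = (if m < n then P (n - 1 - m) else 0)" for m
    using k by (auto simp: Wf_def P_def power_divide nat_diff_distrib)
  have "(\<Sum>m<N. (Wf a b n x (- int m))\<^sup>2) = (\<Sum>m\<in>{m. m < N \<and> m < n}. P (n - 1 - m))"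
    unfolding W by (rule sum.mono_neutral_cong_right) auto
  also have "\<dots> = (\<Sum>i\<in>(\<lambda>m. n - 1 - m) ` {m. m < N \<and> m < n}. P i)"
    by (subst sum.reindex) (auto simp: inj_on_def)
  also have "\<dots> \<le> (\<Sum>i\<le>n. P i)"
    by (rule sum_mono2) (use k in \<open>auto simp: P_def\<close>)
  also have "\<dots> = 1" using k by (simp add: P_def CD_kernel_def power2_eq_square sum_divide_distrib[symmetric])
  finally show ?thesis .
qed

lemma Wf_rec:
  assumes "j \<le> 0" "int n + j \<ge> 2" "a (nat (int n + j)) \<noteq> 0"
  shows "a (nat (int n + j)) * Wf a b n x (j+1) + b (nat (int n + j)) * Wf a b n x j
        + a (nat (int n + (j - 1))) * Wf a b n x (j - 1) = x * Wf a b n x j"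
proof -
  obtain i where i: "int n + j = int i + 2" using assms(2) by (metis add.commute le_iff_add zle_iff_zadd)
  have e1: "nat (int n + j) = i + 2" "nat (int n + (j+1) - 1) = i+2" "nat (int n + j - 1) = i + 1"
    "nat (int n + (j - 1) - 1) = i" "nat (int n + (j - 1)) = i + 1" using i by auto
  have "a (i+2) * orth_poly a b (i+2) x + b (i+2) * orth_poly a b (i+1) x + a (i+1) * orth_poly a b i x
         = x * orth_poly a b (i+1) x" by (rule p_rec) (use assms(3) e1 in simp)
  then have "(a (i+2) * orth_poly a b (i+2) x + b (i+2) * orth_poly a b (i+1) x + a (i+1) * orth_poly a b i x) / sqrt (CD_kernel a b n x x)
         = x * orth_poly a b (i+1) x / sqrt (CD_kernel a b n x x)" by simp
  moreover have "Wf a b n x (j+1) = orth_poly a b (i+2) x / sqrt (CD_kernel a b n x x)"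
    "Wf a b n x j = orth_poly a b (i+1) x / sqrt (CD_kernel a b n x x)"
    "Wf a b n x (j - 1) = orth_poly a b i x / sqrt (CD_kernel a b n x x)"
    using assms(1,2) e1 unfolding Wf_def by (simp_all del: orth_poly.simps)
  ultimately show ?thesis using e1 by (simp add: add_divide_distrib del: orth_poly.simps)
qed



definition Evec :: "nat \<Rightarrow> nat \<Rightarrow> real" where "Evec j = (\<lambda>m. if m = j + 1 then 1 else 0)"

lemma jac_lin2: "(jacobi_apply a b ^^ k) (\<lambda>n. c1 * v1 n + c2 * v2 n)
   = (\<lambda>n. c1 * (jacobi_apply a b ^^ k) v1 n + c2 * (jacobi_apply a b ^^ k) v2 n)"
  by (induction k) (auto simp: jacobi_apply_def algebra_simps fun_eq_iff)

lemma jac_lin3: "(jacobi_apply a b ^^ k) (\<lambda>n. c1 * v1 n + c2 * v2 n + c3 * v3 n)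
   = (\<lambda>n. c1 * (jacobi_apply a b ^^ k) v1 n + c2 * (jacobi_apply a b ^^ k) v2 n + c3 * (jacobi_apply a b ^^ k) v3 n)"
  by (induction k) (auto simp: jacobi_apply_def algebra_simps fun_eq_iff)

lemma JE0: "jacobi_apply a b (Evec 0) = (\<lambda>n. b 1 * Evec 0 n + a 1 * Evec 1 n)"
  by (auto simp: jacobi_apply_def Evec_def fun_eq_iff)

lemma JES: "jacobi_apply a b (Evec (Suc i)) = (\<lambda>n. a (Suc i) * Evec i n + b (i+2) * Evec (Suc i) n + a (i+2) * Evec (i+2) n)"
  by (auto simp: jacobi_apply_def Evec_def fun_eq_iff)

lemma J_at1: "jacobi_apply a b V 1 = b 1 * V 1 + a 1 * V 2"
  by (simp add: jacobi_apply_def numeral_2_eq_2)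

lemma J_atS: "jacobi_apply a b V (i+2) = a (i+1) * V (i+1) + b (i+2) * V (i+2) + a (i+2) * V (i+3)"
  by (simp add: jacobi_apply_def numeral_2_eq_2 numeral_3_eq_3)

context
  fixes a b :: "nat \<Rightarrow> real" and \<rho> :: "real measure"
  assumes a_pos: "\<forall>n\<ge>1. a n > 0" and rho: "jacobi_spectral_measure a b \<rho>"
begin

abbreviation "P \<equiv> orth_poly a b"
abbreviation "J \<equiv> jacobi_apply a b"

definition "D j \<longleftrightarrow> (\<forall>k. integrable \<rho> (\<lambda>x. x ^ k * P j x) \<and>
    integral\<^sup>L \<rho> (\<lambda>x. x ^ k * P j x) = (J ^^ k) (Evec j) 1)"

lemma anz: "a (Suc n) \<noteq> 0" using a_pos by (metis le_add1 less_irrefl plus_1_eq_Suc)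

lemma D_all: "D j \<and> D (Suc j)"
proof (induction j)
  case 0
  have mom: "integrable \<rho> (\<lambda>x. x ^ k)" "integral\<^sup>L \<rho> (\<lambda>x. x ^ k) = (J ^^ k) (Evec 0) 1" for k
    using rho unfolding jacobi_spectral_measure_def by (auto simp: Evec_def)
  have D0: "D 0" unfolding D_def using mom by simp
  have "D 1" unfolding D_def
  proof
    fix k
    have eq: "(\<lambda>x. x ^ k * P 1 x) = (\<lambda>x. (x ^ Suc k - b 1 * x ^ k) / a 1)"
      by (auto simp: fun_eq_iff field_simps)
    have "(J ^^ Suc k) (Evec 0) = (J ^^ k) (J (Evec 0))" by (simp only: funpow_Suc_right o_apply)
    also have "\<dots> = (\<lambda>n. b 1 * (J ^^ k) (Evec 0) n + a 1 * (J ^^ k) (Evec 1) n)"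
      unfolding JE0 jac_lin2 ..
    finally have "(J ^^ Suc k) (Evec 0) 1 = b 1 * (J ^^ k) (Evec 0) 1 + a 1 * (J ^^ k) (Evec 1) 1" by simp
    then show "integrable \<rho> (\<lambda>x. x ^ k * P 1 x) \<and> integral\<^sup>L \<rho> (\<lambda>x. x ^ k * P 1 x) = (J ^^ k) (Evec 1) 1"
      unfolding eq using mom[of k] mom[of "Suc k"] anz[of 0] by (simp add: field_simps)
  qed
  then show ?case using D0 by simp
next
  case (Suc j)
  then have Dj: "D j" and Dj1: "D (Suc j)" by auto
  have "D (Suc (Suc j))" unfolding D_def
  proof
    fix k
    have eq: "(\<lambda>x. x ^ k * P (Suc (Suc j)) x) = (\<lambda>x. (x ^ Suc k * P (Suc j) x - b (j+2) * (x ^ k * P (Suc j) x)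
        - a (j+1) * (x ^ k * P j x)) / a (j+2))"
      by (auto simp: fun_eq_iff field_simps)
    have "(J ^^ Suc k) (Evec (Suc j)) = (J ^^ k) (J (Evec (Suc j)))" by (simp only: funpow_Suc_right o_apply)
    also have "\<dots> = (\<lambda>n. a (Suc j) * (J ^^ k) (Evec j) n + b (j+2) * (J ^^ k) (Evec (Suc j)) n
         + a (j+2) * (J ^^ k) (Evec (j+2)) n)"
      unfolding JES jac_lin3 ..
    finally have "(J ^^ Suc k) (Evec (Suc j)) 1 = a (Suc j) * (J ^^ k) (Evec j) 1 + b (j+2) * (J ^^ k) (Evec (Suc j)) 1
         + a (j+2) * (J ^^ k) (Evec (j+2)) 1" by simp
    then have vv: "(J ^^ k) (Evec (Suc (Suc j))) 1 = ((J ^^ Suc k) (Evec (Suc j)) 1 - b (j+2) * (J ^^ k) (Evec (Suc j)) 1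
         - a (Suc j) * (J ^^ k) (Evec j) 1) / a (j+2)"
      using anz[of "Suc j"] by (simp add: field_simps)
    have i1: "integrable \<rho> (\<lambda>x. x ^ Suc k * P (Suc j) x)" "integral\<^sup>L \<rho> (\<lambda>x. x ^ Suc k * P (Suc j) x) = (J ^^ Suc k) (Evec (Suc j)) 1"
      and i2: "integrable \<rho> (\<lambda>x. x ^ k * P (Suc j) x)" "integral\<^sup>L \<rho> (\<lambda>x. x ^ k * P (Suc j) x) = (J ^^ k) (Evec (Suc j)) 1"
      and i3: "integrable \<rho> (\<lambda>x. x ^ k * P j x)" "integral\<^sup>L \<rho> (\<lambda>x. x ^ k * P j x) = (J ^^ k) (Evec j) 1"
      using Dj Dj1 unfolding D_def by blast+
    show "integrable \<rho> (\<lambda>x. x ^ k * P (Suc (Suc j)) x) \<and>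
       integral\<^sup>L \<rho> (\<lambda>x. x ^ k * P (Suc (Suc j)) x) = (J ^^ k) (Evec (Suc (Suc j))) 1"
      unfolding eq vv using i1 i2 i3 by simp
  qed
  then show ?case using Dj1 by simp
qed

definition "C i \<longleftrightarrow> (\<forall>j k. integrable \<rho> (\<lambda>x. P i x * (x ^ k * P j x)) \<and>
    integral\<^sup>L \<rho> (\<lambda>x. P i x * (x ^ k * P j x)) = (J ^^ k) (Evec j) (i+1))"

lemma C_all: "C i \<and> C (Suc i)"
proof (induction i)
  case 0
  have C0: "C 0" unfolding C_def using D_all unfolding D_def by simp
  have "C 1" unfolding C_def
  proof (intro allI)
    fix j k
    have eq: "(\<lambda>x. P 1 x * (x ^ k * P j x)) = (\<lambda>x. (1 * (x ^ Suc k * P j x) - b 1 * (1 * (x ^ k * P j x))) / a 1)"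
      by (auto simp: fun_eq_iff field_simps)
    have vv: "(J ^^ k) (Evec j) 2 = ((J ^^ Suc k) (Evec j) 1 - b 1 * (J ^^ k) (Evec j) 1) / a 1"
      using anz[of 0] J_at1[of a b "(J ^^ k) (Evec j)"] by (simp add: field_simps)
    have i1: "integrable \<rho> (\<lambda>x. P 0 x * (x ^ Suc k * P j x))" "integral\<^sup>L \<rho> (\<lambda>x. P 0 x * (x ^ Suc k * P j x)) = (J ^^ Suc k) (Evec j) 1"
      and i2: "integrable \<rho> (\<lambda>x. P 0 x * (x ^ k * P j x))" "integral\<^sup>L \<rho> (\<lambda>x. P 0 x * (x ^ k * P j x)) = (J ^^ k) (Evec j) 1"
      using C0[unfolded C_def, rule_format, of "Suc k" j] C0[unfolded C_def, rule_format, of k j] by simp_all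
    show "integrable \<rho> (\<lambda>x. P 1 x * (x ^ k * P j x)) \<and>
       integral\<^sup>L \<rho> (\<lambda>x. P 1 x * (x ^ k * P j x)) = (J ^^ k) (Evec j) (1+1)"
      unfolding eq using i1 i2 vv by (simp add: numeral_2_eq_2)
  qed
  then show ?case using C0 by simp
next
  case (Suc i)
  then have Ci: "C i" and Ci1: "C (Suc i)" by auto
  have "C (Suc (Suc i))" unfolding C_def
  proof (intro allI)
    fix j k
    have eq: "(\<lambda>x. P (Suc (Suc i)) x * (x ^ k * P j x)) = (\<lambda>x. (P (Suc i) x * (x ^ Suc k * P j x)
       - b (i+2) * (P (Suc i) x * (x ^ k * P j x)) - a (i+1) * (P i x * (x ^ k * P j x))) / a (i+2))"
      by (auto simp: fun_eq_iff field_simps)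
    have vv: "(J ^^ k) (Evec j) (i+3) = ((J ^^ Suc k) (Evec j) (i+2) - b (i+2) * (J ^^ k) (Evec j) (i+2)
        - a (i+1) * (J ^^ k) (Evec j) (i+1)) / a (i+2)"
      using anz[of "Suc i"] J_atS[of a b "(J ^^ k) (Evec j)" i] by (simp add: field_simps)
    have i1: "integrable \<rho> (\<lambda>x. P (Suc i) x * (x ^ Suc k * P j x))" "integral\<^sup>L \<rho> (\<lambda>x. P (Suc i) x * (x ^ Suc k * P j x)) = (J ^^ Suc k) (Evec j) (Suc i + 1)"
      and i2: "integrable \<rho> (\<lambda>x. P (Suc i) x * (x ^ k * P j x))" "integral\<^sup>L \<rho> (\<lambda>x. P (Suc i) x * (x ^ k * P j x)) = (J ^^ k) (Evec j) (Suc i + 1)"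
      and i3: "integrable \<rho> (\<lambda>x. P i x * (x ^ k * P j x))" "integral\<^sup>L \<rho> (\<lambda>x. P i x * (x ^ k * P j x)) = (J ^^ k) (Evec j) (i+1)"
      using Ci Ci1 unfolding C_def by blast+
    show "integrable \<rho> (\<lambda>x. P (Suc (Suc i)) x * (x ^ k * P j x)) \<and>
       integral\<^sup>L \<rho> (\<lambda>x. P (Suc (Suc i)) x * (x ^ k * P j x)) = (J ^^ k) (Evec j) (Suc (Suc i) + 1)"
      unfolding eq using i1 i2 i3 vv by (simp add: numeral_3_eq_3)
  qed
  then show ?case using Ci1 by simp
qed

lemma ortho: "integrable \<rho> (\<lambda>x. P i x * P j x)" "integral\<^sup>L \<rho> (\<lambda>x. P i x * P j x) = (if i = j then 1 else 0)"
proof -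
  have "integrable \<rho> (\<lambda>x. P i x * (x ^ 0 * P j x)) \<and>
    integral\<^sup>L \<rho> (\<lambda>x. P i x * (x ^ 0 * P j x)) = (J ^^ 0) (Evec j) (i+1)"
    using C_all[of i] unfolding C_def by blast
  then show "integrable \<rho> (\<lambda>x. P i x * P j x)" "integral\<^sup>L \<rho> (\<lambda>x. P i x * P j x) = (if i = j then 1 else 0)"
    by (auto simp: Evec_def)
qed

end


lemma weak_conv:
  fixes M :: "real measure" and g :: "nat \<Rightarrow> real \<Rightarrow> real" and f :: "real \<Rightarrow> real"
  assumes gi: "\<And>n. integrable M (g n)" and g1: "\<And>n. integral\<^sup>L M (g n) = 1" and g0: "\<And>n x. g n x \<ge> 0"
    and mi: "\<And>n. integrable M (\<lambda>x. (x - x0)\<^sup>2 * g n x)"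
    and ml: "(\<lambda>n. integral\<^sup>L M (\<lambda>x. (x - x0)\<^sup>2 * g n x)) \<longlonglongrightarrow> 0"
    and fc: "continuous_on UNIV f" and fb: "bounded (range f)" and fm: "f \<in> borel_measurable M"
  shows "(\<lambda>n. integral\<^sup>L M (\<lambda>x. f x * g n x)) \<longlonglongrightarrow> f x0"
proof -
  obtain B where B: "\<And>x. \<bar>f x\<bar> \<le> B" using fb by (auto simp: bounded_iff)
  have B0: "0 \<le> B" using B[of 0] by simp
  have fgi: "integrable M (\<lambda>x. f x * g n x)" for n
  proof (rule Bochner_Integration.integrable_bound[where f="\<lambda>x. B * g n x"])
    show "integrable M (\<lambda>x. B * g n x)" using gi by simp
    show "(\<lambda>x. f x * g n x) \<in> borel_measurable M"
      using fm borel_measurable_integrable[OF gi[of n]] by measurable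
    show "AE x in M. norm (f x * g n x) \<le> norm (B * g n x)"
      using B g0 B0 by (auto simp: abs_mult intro!: mult_right_mono)
  qed
  show ?thesis unfolding LIMSEQ_iff
  proof (intro allI impI)
    fix \<epsilon> :: real assume e: "0 < \<epsilon>"
    have "isCont f x0" using fc by (simp add: continuous_on_eq_continuous_at)
    then obtain \<eta> where eta: "\<eta> > 0" "\<And>x. \<bar>x - x0\<bar> < \<eta> \<Longrightarrow> \<bar>f x - f x0\<bar> < \<epsilon>/2"
      unfolding continuous_at_eps_delta dist_real_def using e by (metis half_gt_zero)
    define c where "c = 2 * B / \<eta>\<^sup>2"
    have c0: "c \<ge> 0" using B0 by (simp add: c_def)
    have pt: "\<bar>f x - f x0\<bar> \<le> \<epsilon>/2 + c * (x - x0)\<^sup>2" for x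
    proof (cases "\<bar>x - x0\<bar> < \<eta>")
      case True then show ?thesis using eta(2)[of x] c0 by (smt (verit) mult_nonneg_nonneg zero_le_power2)
    next
      case False
      then have "\<eta>\<^sup>2 \<le> (x - x0)\<^sup>2" using eta(1) by (metis abs_le_square_iff abs_of_pos not_less)
      then have "2 * B \<le> c * (x - x0)\<^sup>2" using eta(1) B0 unfolding c_def
        by (simp add: field_simps) (metis mult_left_mono mult.commute)
      moreover have "\<bar>f x - f x0\<bar> \<le> 2 * B" using B[of x] B[of x0] by linarith
      ultimately show ?thesis using e by linarith
    qed
    have "(\<lambda>n. c * integral\<^sup>L M (\<lambda>x. (x - x0)\<^sup>2 * g n x)) \<longlonglongrightarrow> c * 0"
      by (intro tendsto_mult tendsto_const ml)
    then obtain N where N: "\<And>n. n \<ge> N \<Longrightarrow> \<bar>c * integral\<^sup>L M (\<lambda>x. (x - x0)\<^sup>2 * g n x)\<bar> < \<epsilon>/2"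
      unfolding LIMSEQ_iff using e by (metis half_gt_zero mult_zero_right real_norm_def diff_zero)
    show "\<exists>no. \<forall>n\<ge>no. norm (integral\<^sup>L M (\<lambda>x. f x * g n x) - f x0) < \<epsilon>"
    proof (intro exI allI impI)
      fix n assume n: "N \<le> n"
      have "integral\<^sup>L M (\<lambda>x. f x * g n x) - f x0 = integral\<^sup>L M (\<lambda>x. f x * g n x - f x0 * g n x)"
        using fgi gi g1 by simp
      also have "\<dots> = integral\<^sup>L M (\<lambda>x. (f x - f x0) * g n x)" by (simp add: algebra_simps)
      finally have eq: "integral\<^sup>L M (\<lambda>x. f x * g n x) - f x0 = integral\<^sup>L M (\<lambda>x. (f x - f x0) * g n x)" .
      have "\<bar>integral\<^sup>L M (\<lambda>x. (f x - f x0) * g n x)\<bar> \<le> integral\<^sup>L M (\<lambda>x. \<epsilon>/2 * g n x + c * ((x - x0)\<^sup>2 * g n x))"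
      proof (rule integral_abs_bound_integral)
        show "integrable M (\<lambda>x. (f x - f x0) * g n x)" using fgi gi by (simp add: left_diff_distrib)
        show "integrable M (\<lambda>x. \<epsilon>/2 * g n x + c * ((x - x0)\<^sup>2 * g n x))" using gi mi by simp
        show "\<bar>(f x - f x0) * g n x\<bar> \<le> \<epsilon>/2 * g n x + c * ((x - x0)\<^sup>2 * g n x)" for x
        proof -
          have "\<bar>(f x - f x0) * g n x\<bar> = \<bar>f x - f x0\<bar> * g n x" using g0[of n x] by (simp add: abs_mult)
          also have "\<dots> \<le> (\<epsilon>/2 + c * (x - x0)\<^sup>2) * g n x" by (rule mult_right_mono[OF pt[of x] g0[of n x]])
          finally show ?thesis by (simp add: algebra_simps)
        qed
      qed
      also have "\<dots> = \<epsilon>/2 + c * integral\<^sup>L M (\<lambda>x. (x - x0)\<^sup>2 * g n x)" using gi mi g1 by simp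
      also have "\<dots> < \<epsilon>" using N[OF n] by linarith
      finally show "norm (integral\<^sup>L M (\<lambda>x. f x * g n x) - f x0) < \<epsilon>" using eq by simp
    qed
  qed
qed



lemma CD_formula:
  assumes a_pos: "\<forall>n\<ge>1. a n > 0"
  shows "(x - y) * CD_kernel a b n x y = a (Suc n) * (orth_poly a b (Suc n) x * orth_poly a b n y - orth_poly a b n x * orth_poly a b (Suc n) y)"
proof (induction n)
  case 0
  have "a 1 \<noteq> 0" using a_pos by auto
  then show ?case by (simp add: CD_kernel_def field_simps)
next
  case (Suc n)
  have nz: "a (Suc (Suc n)) \<noteq> 0" using a_pos by (metis le_add1 less_irrefl plus_1_eq_Suc)
  have "(x - y) * CD_kernel a b (Suc n) x y = (x - y) * CD_kernel a b n x y + (x - y) * (orth_poly a b (Suc n) x * orth_poly a b (Suc n) y)"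
    by (simp add: CD_kernel_def algebra_simps)
  also have "\<dots> = a (Suc (Suc n)) * (orth_poly a b (Suc (Suc n)) x * orth_poly a b (Suc n) y - orth_poly a b (Suc n) x * orth_poly a b (Suc (Suc n)) y)"
    unfolding Suc using nz by (simp add: field_simps)
  finally show ?case .
qed

context
  fixes a b :: "nat \<Rightarrow> real" and \<rho> :: "real measure"
  assumes a_pos: "\<forall>n\<ge>1. a n > 0" and rho: "jacobi_spectral_measure a b \<rho>"
begin

lemma ortho': "integrable \<rho> (\<lambda>x. orth_poly a b i x * orth_poly a b j x)"
  "integral\<^sup>L \<rho> (\<lambda>x. orth_poly a b i x * orth_poly a b j x) = (if i = j then 1 else 0)"
  using ortho[OF a_pos rho] by auto

lemma K_sq: "integrable \<rho> (\<lambda>x. (CD_kernel a b n x x0)\<^sup>2)"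
  "integral\<^sup>L \<rho> (\<lambda>x. (CD_kernel a b n x x0)\<^sup>2) = CD_kernel a b n x0 x0"
proof -
  have eq: "(\<lambda>x. (CD_kernel a b n x x0)\<^sup>2) = (\<lambda>x. \<Sum>i\<le>n. \<Sum>j\<le>n. (orth_poly a b i x0 * orth_poly a b j x0) * (orth_poly a b i x * orth_poly a b j x))"
    by (auto simp: fun_eq_iff CD_kernel_def power2_eq_square sum_product algebra_simps)
  show "integrable \<rho> (\<lambda>x. (CD_kernel a b n x x0)\<^sup>2)" unfolding eq using ortho' by auto
  have "integral\<^sup>L \<rho> (\<lambda>x. (CD_kernel a b n x x0)\<^sup>2) = (\<Sum>i\<le>n. \<Sum>j\<le>n. (orth_poly a b i x0 * orth_poly a b j x0) * (if i = j then 1 else 0))"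
    unfolding eq using ortho' by (simp add: integral_sum)
  also have "\<dots> = (\<Sum>i\<le>n. orth_poly a b i x0 * orth_poly a b i x0)"
    by (rule sum.cong) (auto simp: if_distrib sum.delta cong: if_cong)
  finally show "integral\<^sup>L \<rho> (\<lambda>x. (CD_kernel a b n x x0)\<^sup>2) = CD_kernel a b n x0 x0"
    by (simp add: CD_kernel_def)
qed

lemma K_mom: "integrable \<rho> (\<lambda>x. (x - x0)\<^sup>2 * (CD_kernel a b n x x0)\<^sup>2)"
  "integral\<^sup>L \<rho> (\<lambda>x. (x - x0)\<^sup>2 * (CD_kernel a b n x x0)\<^sup>2) = (a (Suc n))\<^sup>2 * ((orth_poly a b n x0)\<^sup>2 + (orth_poly a b (Suc n) x0)\<^sup>2)"
proof -
  define p where "p = orth_poly a b n x0"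
  define q where "q = orth_poly a b (Suc n) x0"
  have eq: "(\<lambda>x. (x - x0)\<^sup>2 * (CD_kernel a b n x x0)\<^sup>2) = (\<lambda>x. (a (Suc n))\<^sup>2 * (p\<^sup>2 * (orth_poly a b (Suc n) x * orth_poly a b (Suc n) x)
     - 2 * p * q * (orth_poly a b (Suc n) x * orth_poly a b n x) + q\<^sup>2 * (orth_poly a b n x * orth_poly a b n x)))"
  proof
    fix x
    have "(x - x0)\<^sup>2 * (CD_kernel a b n x x0)\<^sup>2 = ((x - x0) * CD_kernel a b n x x0)\<^sup>2" by (simp add: power_mult_distrib)
    also have "\<dots> = (a (Suc n) * (orth_poly a b (Suc n) x * p - orth_poly a b n x * q))\<^sup>2"
      unfolding CD_formula[OF a_pos] p_def q_def ..
    finally show "(x - x0)\<^sup>2 * (CD_kernel a b n x x0)\<^sup>2 = (a (Suc n))\<^sup>2 * (p\<^sup>2 * (orth_poly a b (Suc n) x * orth_poly a b (Suc n) x)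
     - 2 * p * q * (orth_poly a b (Suc n) x * orth_poly a b n x) + q\<^sup>2 * (orth_poly a b n x * orth_poly a b n x))"
      by (simp add: power2_eq_square algebra_simps)
  qed
  show "integrable \<rho> (\<lambda>x. (x - x0)\<^sup>2 * (CD_kernel a b n x x0)\<^sup>2)" unfolding eq using ortho' by auto
  show "integral\<^sup>L \<rho> (\<lambda>x. (x - x0)\<^sup>2 * (CD_kernel a b n x x0)\<^sup>2) = (a (Suc n))\<^sup>2 * ((orth_poly a b n x0)\<^sup>2 + (orth_poly a b (Suc n) x0)\<^sup>2)"
  proof -
    have "integral\<^sup>L \<rho> (\<lambda>x. (x - x0)\<^sup>2 * (CD_kernel a b n x x0)\<^sup>2) = (a (Suc n))\<^sup>2 * (p\<^sup>2 * 1 - 2 * p * q * 0 + q\<^sup>2 * 1)"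
      unfolding eq using ortho' by simp
    then show ?thesis by (simp add: p_def q_def algebra_simps)
  qed
qed

end



lemma tendsto_apply_fun:
  fixes f :: "'b \<Rightarrow> 'c \<Rightarrow> 'd::topological_space"
  assumes "(f \<longlongrightarrow> g) F" shows "((\<lambda>k. f k j) \<longlongrightarrow> g j) F"
  using continuous_on_tendsto_compose[OF continuous_on_product_coordinates[of j] assms] by simp

lemma compact_PiE_UNIV:
  assumes "compact S" shows "compact (PiE (UNIV::'i set) (\<lambda>_. S :: 'a::topological_space set))"
  using assms by (metis compactin_PiE compactin_euclidean_iff euclidean_product_topology)

lemma part1:
  fixes a b :: "nat \<Rightarrow> real" and K :: "real set"
    and u :: "(int \<Rightarrow> real) \<Rightarrow> (int \<Rightarrow> real) \<Rightarrow> real \<Rightarrow> int \<Rightarrow> complex"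
  assumes a_pos: "\<forall>n\<ge>1. a n > 0"
    and a_sup: "\<exists>C. \<forall>n\<ge>1. a n \<le> C"
    and b_bdd: "\<exists>B. \<forall>n\<ge>1. \<bar>b n\<bar> \<le> B"
    and K_compact: "compact K"
    and u_sol: "\<forall>ar br x0 n. is_right_limit a b ar br \<and> x0 \<in> K \<longrightarrow>
        complex_of_real (ar n) * u ar br x0 (n + 1) + complex_of_real (br n) * u ar br x0 n
          + complex_of_real (ar (n - 1)) * u ar br x0 (n - 1)
        = complex_of_real x0 * u ar br x0 n"
    and u_bdd: "\<exists>M. \<forall>ar br x0 n. is_right_limit a b ar br \<and> x0 \<in> K \<longrightarrow>
        cmod (u ar br x0 n) \<le> M"
    and u_wronsk: "\<exists>\<delta>>0. \<forall>ar br x0. is_right_limit a b ar br \<and> x0 \<in> K \<longrightarrow>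
        \<delta> \<le> ar 0 * cmod (u ar br x0 1 * cnj (u ar br x0 0) - cnj (u ar br x0 1) * u ar br x0 0)"
  shows "uniform_limit K
           (\<lambda>n x0. (orth_poly a b n x0)\<^sup>2 / CD_kernel a b n x0 x0) (\<lambda>x0. 0) sequentially"
proof (rule ccontr)
  define F where "F n x = (orth_poly a b n x)\<^sup>2 / CD_kernel a b n x x" for n x
  have F0: "0 \<le> F n x" for n x using Kd_pos[of a b n x] by (simp add: F_def)
  assume "\<not> uniform_limit K (\<lambda>n x0. (orth_poly a b n x0)\<^sup>2 / CD_kernel a b n x0 x0) (\<lambda>x0. 0) sequentially"
  then obtain e where e: "e > 0" "\<not> (\<forall>\<^sub>F n in sequentially. \<forall>x\<in>K. dist (F n x) 0 < e)"
    unfolding uniform_limit_iff F_def by auto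
  have "\<forall>N. \<exists>n\<ge>N. \<exists>x\<in>K. e \<le> F n x"
    using e(2) F0 by (auto simp: eventually_sequentially dist_real_def not_less)
  then obtain nn xx where nx: "\<And>N. N \<le> nn N" "\<And>N. xx N \<in> K" "\<And>N. e \<le> F (nn N) (xx N)"
    by metis
  obtain C where C: "\<forall>n\<ge>1. a n \<le> C" using a_sup by blast
  obtain Bb where Bb: "\<forall>n\<ge>1. \<bar>b n\<bar> \<le> Bb" using b_bdd by blast
  define Ca where "Ca = max C \<bar>a 0\<bar>"
  define Cb where "Cb = max Bb \<bar>b 0\<bar>"
  have abnd: "\<bar>a n\<bar> \<le> Ca" for n
  proof (cases "n = 0")
    case False
    then have "0 < a n" "a n \<le> C" using C a_pos by auto
    then show ?thesis unfolding Ca_def by auto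
  qed (auto simp: Ca_def)
  have bbnd: "\<bar>b n\<bar> \<le> Cb" for n
  proof (cases "n = 0")
    case False
    then show ?thesis using Bb unfolding Cb_def by (metis max.coboundedI1 less_one not_less)
  qed (auto simp: Cb_def)
  define A where "A k = (\<lambda>j::int. a (nat (int (nn k) + j)))" for k
  define B where "B k = (\<lambda>j::int. b (nat (int (nn k) + j)))" for k
  define Wk where "Wk k = Wf a b (nn k) (xx k)" for k
  define T where "T k = (A k, B k, Wk k, xx k)" for k
  define S where "S = (PiE (UNIV::int set) (\<lambda>_. {-Ca..Ca})) \<times> (PiE (UNIV::int set) (\<lambda>_. {-Cb..Cb}))
     \<times> (PiE (UNIV::int set) (\<lambda>_. {-1..1::real})) \<times> K"
  have cS: "compact S" unfolding S_def
    by (intro compact_Times compact_PiE_UNIV compact_Icc K_compact)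
  have TS: "T k \<in> S" for k
    using abnd bbnd Wf_bdd nx(2) unfolding S_def T_def A_def B_def Wk_def
    by (auto simp: abs_le_iff) (metis minus_le_iff)+
  obtain l r where lr: "l \<in> S" "strict_mono r" "(T \<circ> r) \<longlonglongrightarrow> l"
    using compact_imp_seq_compact[OF cS] TS unfolding seq_compact_def by metis
  obtain ar br w x0 where l: "l = (ar, br, w, x0)" by (metis prod_cases4)
  have limA: "(\<lambda>k. A (r k)) \<longlonglongrightarrow> ar"
    using tendsto_fst[OF lr(3)] by (simp add: l T_def o_def)
  have limB: "(\<lambda>k. B (r k)) \<longlonglongrightarrow> br"
    using tendsto_fst[OF tendsto_snd[OF lr(3)]] by (simp add: l T_def o_def)
  have limW: "(\<lambda>k. Wk (r k)) \<longlonglongrightarrow> w"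
    using tendsto_fst[OF tendsto_snd[OF tendsto_snd[OF lr(3)]]] by (simp add: l T_def o_def)
  have limx: "(\<lambda>k. xx (r k)) \<longlonglongrightarrow> x0"
    using tendsto_snd[OF tendsto_snd[OF tendsto_snd[OF lr(3)]]] by (simp add: l T_def o_def)
  have limA': "(\<lambda>k. A (r k) j) \<longlonglongrightarrow> ar j" for j using tendsto_apply_fun[OF limA] .
  have limB': "(\<lambda>k. B (r k) j) \<longlonglongrightarrow> br j" for j using tendsto_apply_fun[OF limB] .
  have limW': "(\<lambda>k. Wk (r k) j) \<longlonglongrightarrow> w j" for j using tendsto_apply_fun[OF limW] .
  define m where "m = nn \<circ> r"
  have mk: "k \<le> m k" for k
    using nx(1)[of "r k"] seq_suble[OF lr(2), of k] unfolding m_def by simp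
  have RL: "is_right_limit a b ar br"
    unfolding is_right_limit_def
  proof (intro exI conjI allI)
    show "filterlim m at_top sequentially"
      unfolding filterlim_at_top eventually_sequentially using mk order_trans by blast
    show "(\<lambda>j. a (nat (int (m j) + n))) \<longlonglongrightarrow> ar n" for n
      using limA'[of n] by (simp add: A_def m_def)
    show "(\<lambda>j. b (nat (int (m j) + n))) \<longlonglongrightarrow> br n" for n
      using limB'[of n] by (simp add: B_def m_def)
  qed
  have x0K: "x0 \<in> K" and arS: "ar \<in> UNIV \<rightarrow>\<^sub>E {-Ca..Ca}" and wS: "w \<in> UNIV \<rightarrow>\<^sub>E {-1..1}"
    using lr(1) unfolding l S_def by auto
  have arb: "\<bar>ar j\<bar> \<le> Ca" for j using PiE_mem[OF arS UNIV_I, of j] by auto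
  have wb: "\<bar>w j\<bar> \<le> 1" for j using PiE_mem[OF wS UNIV_I, of j] by auto
  have "e \<le> (w 1)\<^sup>2"
  proof (rule LIMSEQ_le_const)
    show "(\<lambda>k. (Wk (r k) 1)\<^sup>2) \<longlonglongrightarrow> (w 1)\<^sup>2" by (intro tendsto_power limW')
    have "(Wk k 1)\<^sup>2 = F (nn k) (xx k)" for k
      using Kd_pos[of a b "nn k" "xx k"] by (simp add: Wk_def Wf_def F_def power_divide)
    then show "\<exists>N. \<forall>n\<ge>N. e \<le> (Wk (r n) 1)\<^sup>2" using nx(3) by auto
  qed
  then have w1: "w 1 \<noteq> 0" using e(1) by auto
  have wrec: "ar j * w (j+1) + br j * w j + ar (j-1) * w (j-1) = x0 * w j" if j: "j \<le> 0" for j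
  proof (rule LIMSEQ_unique)
    show "(\<lambda>k. A (r k) j * Wk (r k) (j+1) + B (r k) j * Wk (r k) j + A (r k) (j-1) * Wk (r k) (j-1))
       \<longlonglongrightarrow> ar j * w (j+1) + br j * w j + ar (j-1) * w (j-1)"
      by (intro tendsto_intros limA' limB' limW')
    have ev: "\<forall>\<^sub>F k in sequentially. xx (r k) * Wk (r k) j =
        A (r k) j * Wk (r k) (j+1) + B (r k) j * Wk (r k) j + A (r k) (j-1) * Wk (r k) (j-1)"
      unfolding eventually_sequentially
    proof (intro exI allI impI)
      fix k assume k: "nat (2 - j) \<le> k"
      then have k2: "int (nn (r k)) + j \<ge> 2" using mk[of k] unfolding m_def by auto
      then have "nat (int (nn (r k)) + j) \<ge> 1" by linarith
      then have "a (nat (int (nn (r k)) + j)) \<noteq> 0" using a_pos by (metis less_irrefl)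
      from Wf_rec[where a=a and b=b and x="xx (r k)", OF j k2 this]
      show "xx (r k) * Wk (r k) j =
        A (r k) j * Wk (r k) (j+1) + B (r k) j * Wk (r k) j + A (r k) (j-1) * Wk (r k) (j-1)"
        by (simp add: A_def B_def Wk_def)
    qed
    show "(\<lambda>k. A (r k) j * Wk (r k) (j+1) + B (r k) j * Wk (r k) j + A (r k) (j-1) * Wk (r k) (j-1))
       \<longlonglongrightarrow> x0 * w j"
      by (rule Lim_transform_eventually[OF _ ev]) (intro tendsto_intros limx limW')
  qed
  have wsum: "(\<Sum>i<N. (w (- int i))\<^sup>2) \<le> 1" for N
  proof (rule LIMSEQ_le_const2)
    show "(\<lambda>k. \<Sum>i<N. (Wk (r k) (- int i))\<^sup>2) \<longlonglongrightarrow> (\<Sum>i<N. (w (- int i))\<^sup>2)"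
      by (intro tendsto_intros limW')
    show "\<exists>N'. \<forall>k\<ge>N'. (\<Sum>i<N. (Wk (r k) (- int i))\<^sup>2) \<le> 1"
      by (auto simp: Wk_def Wf_sum)
  qed
  have "summable (\<lambda>i. (w (- int i))\<^sup>2)"
    by (rule summableI_nonneg_bounded[OF _ wsum]) simp
  then have "(\<lambda>i. (w (- int i))\<^sup>2) \<longlonglongrightarrow> 0" by (rule summable_LIMSEQ_zero)
  then have "(\<lambda>i. sqrt ((w (- int i))\<^sup>2)) \<longlonglongrightarrow> sqrt 0" by (rule tendsto_real_sqrt)
  then have w0: "(\<lambda>i. \<bar>w (- int i)\<bar>) \<longlonglongrightarrow> 0" by simp
  then have w0': "(\<lambda>i. \<bar>w (- int i - 1)\<bar>) \<longlonglongrightarrow> 0"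
    using LIMSEQ_Suc[OF w0] by (simp only: of_nat_Suc minus_add_distrib diff_conv_add_uminus add.commute)
  obtain M where M: "\<And>n. cmod (u ar br x0 n) \<le> M" using u_bdd RL x0K by blast
  obtain \<delta> where \<delta>: "\<delta> > 0" "\<delta> \<le> ar 0 * cmod (u ar br x0 1 * cnj (u ar br x0 0) - cnj (u ar br x0 1) * u ar br x0 0)"
    using u_wronsk RL x0K by blast
  define U where "U = u ar br x0"
  define Wr where "Wr n = complex_of_real (ar n) * (complex_of_real (w (n+1)) * U n - U (n+1) * complex_of_real (w n))" for n
  have step: "Wr (n - 1) = Wr n" if "n \<le> 0" for n
  proof -
    have h1: "complex_of_real (ar n) * complex_of_real (w (n+1)) + complex_of_real (br n) * complex_of_real (w n)
        + complex_of_real (ar (n-1)) * complex_of_real (w (n-1)) = complex_of_real x0 * complex_of_real (w n)"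
      using arg_cong[OF wrec[OF that], of complex_of_real] by simp
    have h2: "complex_of_real (ar n) * U (n+1) + complex_of_real (br n) * U n
        + complex_of_real (ar (n-1)) * U (n-1) = complex_of_real x0 * U n"
      using u_sol RL x0K unfolding U_def by blast
    show ?thesis using wr_step[OF h1 h2] unfolding Wr_def by simp
  qed
  have const: "Wr (- int i - 1) = Wr 0" for i
  proof (induction i)
    case 0 then show ?case using step[of 0] by simp
  next
    case (Suc i)
    have "Wr (- int (Suc i) - 1) = Wr ((- int i - 1) - 1)" by (simp add: algebra_simps)
    also have "\<dots> = Wr (- int i - 1)" by (rule step) simp
    finally show ?case using Suc by simp
  qed
  have bnd: "cmod (Wr 0) \<le> Ca * (\<bar>w (- int i)\<bar> * M + M * \<bar>w (- int i - 1)\<bar>)" for i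
  proof -
    define n where "n = - int i - 1"
    have "cmod (Wr 0) = cmod (Wr n)" unfolding n_def const ..
    also have "\<dots> = \<bar>ar n\<bar> * cmod (complex_of_real (w (n+1)) * U n - U (n+1) * complex_of_real (w n))"
      unfolding Wr_def by (simp add: norm_mult)
    also have "\<dots> \<le> Ca * (\<bar>w (n+1)\<bar> * M + M * \<bar>w n\<bar>)"
    proof (rule mult_mono)
      have "cmod (complex_of_real (w (n+1)) * U n - U (n+1) * complex_of_real (w n))
          \<le> cmod (complex_of_real (w (n+1)) * U n) + cmod (U (n+1) * complex_of_real (w n))"
        by (rule norm_triangle_ineq4)
      also have "\<dots> \<le> \<bar>w (n+1)\<bar> * M + M * \<bar>w n\<bar>"
        using M[unfolded U_def[symmetric]] order_trans[OF norm_ge_zero M[of 0]]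
        by (intro add_mono) (auto simp: norm_mult intro!: mult_mono)
      finally show "cmod (complex_of_real (w (n+1)) * U n - U (n+1) * complex_of_real (w n))
          \<le> \<bar>w (n+1)\<bar> * M + M * \<bar>w n\<bar>" .
    qed (use arb[of n] in auto)
    finally show ?thesis by (simp add: n_def)
  qed
  have "cmod (Wr 0) \<le> 0"
  proof (rule LIMSEQ_le_const)
    show "(\<lambda>i. Ca * (\<bar>w (- int i)\<bar> * M + M * \<bar>w (- int i - 1)\<bar>)) \<longlonglongrightarrow> 0"
      using tendsto_mult[OF tendsto_const[of Ca] tendsto_add[OF tendsto_mult[OF w0 tendsto_const[of M]] tendsto_mult[OF tendsto_const[of M] w0']]]
      by simp
  qed (use bnd in auto)
  then have Wr0: "Wr 0 = 0" by simp
  have ar0: "ar 0 \<noteq> 0" using \<delta> by auto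
  have D: "U 1 * cnj (U 0) - cnj (U 1) * U 0 \<noteq> 0" using \<delta> unfolding U_def by auto
  have "complex_of_real (w 1) * U 0 = U 1 * complex_of_real (w 0)"
    using Wr0 ar0 unfolding Wr_def by simp
  from final_alg[OF this D] w1 show False by simp
qed


lemma part2:
  fixes a b :: "nat \<Rightarrow> real" and K :: "real set" and f :: "real \<Rightarrow> real"
  assumes a_pos: "\<forall>n\<ge>1. a n > 0" and a_sup: "\<exists>C. \<forall>n\<ge>1. a n \<le> C"
    and U: "uniform_limit K (\<lambda>n x0. (orth_poly a b n x0)\<^sup>2 / CD_kernel a b n x0 x0) (\<lambda>x0. 0) sequentially"
    and rho: "jacobi_spectral_measure a b \<rho>" and x0: "x0 \<in> K"
    and fc: "continuous_on UNIV f" and fb: "bounded (range f)"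
  shows "(\<lambda>n. integral\<^sup>L \<rho> (\<lambda>x. f x * (CD_kernel a b n x x0)\<^sup>2 / CD_kernel a b n x0 x0)) \<longlonglongrightarrow> f x0"
proof -
  obtain C where C: "\<forall>n\<ge>1. a n \<le> C" using a_sup by blast
  define \<kappa> where "\<kappa> n = CD_kernel a b n x0 x0" for n
  have k1: "\<kappa> n \<ge> 1" for n unfolding \<kappa>_def by (rule Kd_pos)
  define g where "g n x = (CD_kernel a b n x x0)\<^sup>2 / \<kappa> n" for n x
  define r where "r n = (orth_poly a b n x0)\<^sup>2 / \<kappa> n" for n
  have r0: "r \<longlonglongrightarrow> 0" using tendsto_uniform_limitI[OF U x0] by (simp add: r_def[abs_def] \<kappa>_def)
  have r1: "(\<lambda>n. r (Suc n)) \<longlonglongrightarrow> 0" using LIMSEQ_Suc[OF r0] .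
  have kS: "\<kappa> (Suc n) = \<kappa> n + (orth_poly a b (Suc n) x0)\<^sup>2" for n
    by (simp add: \<kappa>_def CD_kernel_def power2_eq_square)
  have qid: "(orth_poly a b (Suc n) x0)\<^sup>2 / \<kappa> n = r (Suc n) / (1 - r (Suc n))" for n
  proof -
    have p: "\<kappa> (Suc n) > 0" "\<kappa> n > 0" using k1[of "Suc n"] k1[of n] by auto
    define q where "q = (orth_poly a b (Suc n) x0)\<^sup>2"
    have rS: "r (Suc n) = q / \<kappa> (Suc n)" unfolding r_def q_def ..
    have "1 - r (Suc n) = \<kappa> n / \<kappa> (Suc n)" using p unfolding rS kS q_def by (simp add: field_simps)
    then have "r (Suc n) / (1 - r (Suc n)) = (q / \<kappa> (Suc n)) / (\<kappa> n / \<kappa> (Suc n))" unfolding rS by simp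
    also have "\<dots> = q / \<kappa> n" using p by (simp add: field_simps)
    finally show ?thesis unfolding q_def by simp
  qed
  define E where "E n = integral\<^sup>L \<rho> (\<lambda>x. (x - x0)\<^sup>2 * g n x)" for n
  have Eeq: "E n = (a (Suc n))\<^sup>2 * (r n + r (Suc n) / (1 - r (Suc n)))" for n
  proof -
    have "E n = integral\<^sup>L \<rho> (\<lambda>x. (x - x0)\<^sup>2 * (CD_kernel a b n x x0)\<^sup>2) / \<kappa> n"
      unfolding E_def g_def by (simp add: times_divide_eq_right)
    also have "\<dots> = (a (Suc n))\<^sup>2 * ((orth_poly a b n x0)\<^sup>2 + (orth_poly a b (Suc n) x0)\<^sup>2) / \<kappa> n"
      unfolding K_mom(2)[OF a_pos rho] ..
    also have "\<dots> = (a (Suc n))\<^sup>2 * (r n + (orth_poly a b (Suc n) x0)\<^sup>2 / \<kappa> n)"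
      unfolding r_def using k1[of n] by (simp add: field_simps)
    finally show ?thesis unfolding qid .
  qed
  have rge: "0 \<le> r n" for n using k1[of n] by (simp add: r_def)
  have rlt: "r (Suc n) < 1" for n
  proof -
    have "\<kappa> (Suc n) > (orth_poly a b (Suc n) x0)\<^sup>2" using kS[of n] k1[of n] by simp
    then show ?thesis using k1[of "Suc n"] by (simp add: r_def)
  qed
  have ml: "E \<longlonglongrightarrow> 0"
  proof (rule tendsto_sandwich)
    show "\<forall>\<^sub>F n in sequentially. (0::real) \<le> E n"
    proof (intro always_eventually allI)
      fix n
      have "0 \<le> r n + r (Suc n) / (1 - r (Suc n))" using rge[of n] rge[of "Suc n"] rlt[of n]
        by (intro add_nonneg_nonneg divide_nonneg_pos) auto
      then show "0 \<le> E n" unfolding Eeq by simp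
    qed
    show "\<forall>\<^sub>F n in sequentially. E n \<le> C\<^sup>2 * (r n + r (Suc n) / (1 - r (Suc n)))"
    proof (intro always_eventually allI)
      fix n
      have "0 < a (Suc n)" "a (Suc n) \<le> C" using a_pos C by auto
      then have "(a (Suc n))\<^sup>2 \<le> C\<^sup>2" by (intro power_mono) auto
      moreover have "0 \<le> r n + r (Suc n) / (1 - r (Suc n))" using rge rlt
        by (intro add_nonneg_nonneg divide_nonneg_pos) (auto simp: less_imp_le)
      ultimately show "E n \<le> C\<^sup>2 * (r n + r (Suc n) / (1 - r (Suc n)))"
        unfolding Eeq by (rule mult_right_mono)
    qed
    show "(\<lambda>n. 0::real) \<longlonglongrightarrow> 0" by simp
    have "(\<lambda>n. C\<^sup>2 * (r n + r (Suc n) / (1 - r (Suc n)))) \<longlonglongrightarrow> C\<^sup>2 * (0 + 0 / (1 - 0))"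
      by (intro tendsto_intros r0 r1) simp
    then show "(\<lambda>n. C\<^sup>2 * (r n + r (Suc n) / (1 - r (Suc n)))) \<longlonglongrightarrow> 0" by simp
  qed
  have sets: "sets \<rho> = sets borel" using rho by (simp add: jacobi_spectral_measure_def)
  have fm: "f \<in> borel_measurable \<rho>"
    using borel_measurable_continuous_onI[OF fc] measurable_cong_sets[OF sets refl, of borel] by blast
  have "(\<lambda>n. integral\<^sup>L \<rho> (\<lambda>x. f x * g n x)) \<longlonglongrightarrow> f x0"
  proof (rule weak_conv[OF _ _ _ _ _ fc fb fm])
    show "integrable \<rho> (g n)" for n unfolding g_def using K_sq(1)[OF a_pos rho] by simp
    show "integral\<^sup>L \<rho> (g n) = 1" for n unfolding g_def using K_sq[OF a_pos rho] k1[of n]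
      by (simp add: \<kappa>_def)
    show "g n x \<ge> 0" for n x unfolding g_def using k1[of n] by simp
    show "integrable \<rho> (\<lambda>x. (x - x0)\<^sup>2 * g n x)" for n unfolding g_def
      using K_mom(1)[OF a_pos rho] by (simp add: times_divide_eq_right)
    show "(\<lambda>n. integral\<^sup>L \<rho> (\<lambda>x. (x - x0)\<^sup>2 * g n x)) \<longlonglongrightarrow> 0" using ml unfolding E_def .
  qed
  then show ?thesis unfolding g_def \<kappa>_def by (simp add: times_divide_eq_right)
qed

theorem proposition7p2:
  fixes a b :: "nat \<Rightarrow> real" and K :: "real set"
    and u :: "(int \<Rightarrow> real) \<Rightarrow> (int \<Rightarrow> real) \<Rightarrow> real \<Rightarrow> int \<Rightarrow> complex"
  assumes a_pos: "\<forall>n\<ge>1. a n > 0"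
    and a_inf: "\<exists>c>0. \<forall>n\<ge>1. c \<le> a n"
    and a_sup: "\<exists>C. \<forall>n\<ge>1. a n \<le> C"
    and b_bdd: "\<exists>B. \<forall>n\<ge>1. \<bar>b n\<bar> \<le> B"
    and K_compact: "compact K"
    and u_sol: "\<forall>ar br x0 n. is_right_limit a b ar br \<and> x0 \<in> K \<longrightarrow>
        complex_of_real (ar n) * u ar br x0 (n + 1) + complex_of_real (br n) * u ar br x0 n
          + complex_of_real (ar (n - 1)) * u ar br x0 (n - 1)
        = complex_of_real x0 * u ar br x0 n"
    and u_bdd: "\<exists>M. \<forall>ar br x0 n. is_right_limit a b ar br \<and> x0 \<in> K \<longrightarrow>
        cmod (u ar br x0 n) \<le> M"
    and u_wronsk: "\<exists>\<delta>>0. \<forall>ar br x0. is_right_limit a b ar br \<and> x0 \<in> K \<longrightarrow>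
        \<delta> \<le> ar 0 * cmod (u ar br x0 1 * cnj (u ar br x0 0) - cnj (u ar br x0 1) * u ar br x0 0)"
  shows "uniform_limit K
           (\<lambda>n x0. (orth_poly a b n x0)\<^sup>2 / CD_kernel a b n x0 x0) (\<lambda>x0. 0) sequentially
         \<and> (\<forall>\<rho> x0 f. jacobi_spectral_measure a b \<rho> \<and> x0 \<in> K \<and>
              continuous_on UNIV f \<and> bounded (range (f :: real \<Rightarrow> real)) \<longrightarrow>
              (\<lambda>n. integral\<^sup>L \<rho> (\<lambda>x. f x * (CD_kernel a b n x x0)\<^sup>2 / CD_kernel a b n x0 x0))
                \<longlonglongrightarrow> f x0)"
proof -
  have U: "uniform_limit K (\<lambda>n x0. (orth_poly a b n x0)\<^sup>2 / CD_kernel a b n x0 x0) (\<lambda>x0. 0) sequentially"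
    by (rule part1[OF a_pos a_sup b_bdd K_compact u_sol u_bdd u_wronsk])
  show ?thesis using U part2[OF a_pos a_sup U] by blast
qed


end
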